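(* Let $\alpha\in\mathbb{C}$ with $|\alpha|<\frac{1}{10}$, and let $\eta:=(1-|\mathrm{Re}(\alpha)|)/3$. Let $g:[0,2]\to\mathbb{R}$ be the continuous piecewise affine map with $g=0$ on $[0,\eta]$, $g=1$ on $[2\eta,2-2\eta]$, $g=0$ on $[2-\eta,2]$, and affine on $[\eta,2\eta]$ and on $[2-2\eta,2-\eta]$; still denote by $g$ its $2$-periodic extension to $\mathbb{R}$. Define $$\psi^{+}(c):=c+\alpha\, g(\mathrm{Re}(c)),\qquad \psi^{-}(c):=c-\alpha+\alpha\, g\big(1+\mathrm{Re}(c-\alpha)\big),\qquad c\in\mathbb{C}.$$ Then $\psi^+,\psi^-$ are homeomorphisms of $\mathbb{C}$ satisfying $$\psi^{+}(c+1-\alpha)=\psi^{-}(c)+1,\quad \psi^{-}(c+1+\alpha)=\psi^{+}(c)+1\quad(\forall c\in\mathbb{C}),\qquad \psi^{+}(0)=\psi^{-}(0)=0,\qquad \lim_{c\to0}\frac{\psi^{\pm}(c)}{c}=\lim_{c\to\infty}\frac{\psi^{\pm}(c)}{c}=1 .$$ Moreover, for all $c\in\mathbb{C}\setminus\{0\}$, $$\left|\frac{\psi^{\pm}(c)}{c}-1\right|<\min\left(\frac{1}{6},\frac{1}{10\,|\mathrm{Re}(c)|}\right)$$ (with $\frac{1}{10|\mathrm{Re}(c)|}:=+\infty$ when $\mathrm{Re}(c)=0$). *)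

theory Defs
  imports "HOL-Analysis.Analysis"
begin

definition eta :: "complex \<Rightarrow> real" where
  "eta \<alpha> = (1 - \<bar>Re \<alpha>\<bar>) / 3"

definition g0 :: "real \<Rightarrow> real \<Rightarrow> real" where
  "g0 e x = (if x \<le> e then 0
             else if x \<le> 2 * e then (x - e) / e
             else if x \<le> 2 - 2 * e then 1
             else if x \<le> 2 - e then (2 - e - x) / e
             else 0)"

definition g :: "real \<Rightarrow> real \<Rightarrow> real" where
  "g e x = g0 e (x - 2 * of_int \<lfloor>x / 2\<rfloor>)"

definition psi_plus :: "complex \<Rightarrow> complex \<Rightarrow> complex" where
  "psi_plus \<alpha> c = c + \<alpha> * complex_of_real (g (eta \<alpha>) (Re c))"

definition psi_minus :: "complex \<Rightarrow> complex \<Rightarrow> complex" where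
  "psi_minus \<alpha> c = c - \<alpha> + \<alpha> * complex_of_real (g (eta \<alpha>) (1 + Re (c - \<alpha>)))"

end

theory Submission imports Defs begin

definition dd :: "real \<Rightarrow> real" where
  "dd x = min (x - 2 * of_int \<lfloor>x/2\<rfloor>) (2 - (x - 2 * of_int \<lfloor>x/2\<rfloor>))"

lemma dd_le: "dd x \<le> \<bar>x - 2 * of_int m\<bar>"
proof -
  have a: "2 * of_int \<lfloor>x/2\<rfloor> \<le> x" "x < 2 * of_int \<lfloor>x/2\<rfloor> + 2"
    using floor_correct[of "x/2"] by linarith+
  show ?thesis
  proof (cases "m \<le> \<lfloor>x/2\<rfloor>")
    case True
    hence "real_of_int m \<le> of_int \<lfloor>x/2\<rfloor>" by simp
    thus ?thesis using a unfolding dd_def by linarith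
  next
    case False
    hence "real_of_int m \<ge> of_int \<lfloor>x/2\<rfloor> + 1" by linarith
    thus ?thesis using a unfolding dd_def by linarith
  qed
qed

lemma dd_attain: "\<exists>m. dd x = \<bar>x - 2 * of_int m\<bar>"
proof -
  have a: "2 * of_int \<lfloor>x/2\<rfloor> \<le> x" "x < 2 * of_int \<lfloor>x/2\<rfloor> + 2"
    using floor_correct[of "x/2"] by linarith+
  show ?thesis
  proof (cases "x - 2 * of_int \<lfloor>x/2\<rfloor> \<le> 1")
    case True
    thus ?thesis using a unfolding dd_def by (intro exI[of _ "\<lfloor>x/2\<rfloor>"]) auto
  next
    case False
    thus ?thesis using a unfolding dd_def by (intro exI[of _ "\<lfloor>x/2\<rfloor> + 1"]) auto
  qed
qed

lemma dd_lip: "dd x \<le> \<bar>x - y\<bar> + dd y"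
proof -
  obtain m where m: "dd y = \<bar>y - 2 * of_int m\<bar>" using dd_attain by blast
  have "dd x \<le> \<bar>x - 2 * of_int m\<bar>" by (rule dd_le)
  thus ?thesis using m by linarith
qed

lemma dd_small: "\<bar>x\<bar> \<le> 1 \<Longrightarrow> dd x = \<bar>x\<bar>"
proof -
  assume x: "\<bar>x\<bar> \<le> 1"
  have "dd x \<le> \<bar>x\<bar>" using dd_le[of x 0] by simp
  moreover obtain m where m: "dd x = \<bar>x - 2 * of_int m\<bar>" using dd_attain by blast
  moreover have "\<bar>x - 2 * of_int m\<bar> \<ge> \<bar>x\<bar>"
  proof (cases "m = 0")
    case False
    hence "\<bar>real_of_int m\<bar> \<ge> 1" by linarith
    thus ?thesis using x by linarith
  qed simp
  ultimately show ?thesis by linarith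
qed

lemma dd_one: "\<bar>a\<bar> \<le> 1 \<Longrightarrow> dd (1 - a) = 1 - \<bar>a\<bar>"
proof -
  assume x: "\<bar>a\<bar> \<le> 1"
  have "dd (1-a) \<le> \<bar>1-a\<bar>" using dd_le[of "1-a" 0] by simp
  moreover have "dd (1-a) \<le> \<bar>1-a-2\<bar>" using dd_le[of "1-a" 1] by simp
  moreover obtain m where m: "dd (1-a) = \<bar>1-a - 2 * of_int m\<bar>" using dd_attain by blast
  moreover have "\<bar>1-a - 2 * of_int m\<bar> \<ge> 1 - \<bar>a\<bar>"
  proof (cases "m \<le> 0")
    case True
    hence "real_of_int m \<le> 0" by simp
    thus ?thesis using x by linarith
  next
    case False
    hence "real_of_int m \<ge> 1" by linarith
    thus ?thesis using x by linarith
  qed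
  ultimately show ?thesis using x by linarith
qed

lemma g_eq: assumes "0 < e" "e \<le> 1/2"
  shows "g e x = max 0 (min 1 ((dd x - e)/e))"
proof -
  define r where "r = x - 2 * of_int \<lfloor>x/2\<rfloor>"
  have a: "0 \<le> r" "r < 2"
    using floor_correct[of "x/2"] unfolding r_def by linarith+
  have d: "dd x = min r (2 - r)" unfolding dd_def r_def ..
  have "g0 e r = max 0 (min 1 ((min r (2 - r) - e)/e))"
  proof -
    have q: "\<And>u. (u - e)/e \<le> 0 \<longleftrightarrow> u \<le> e" "\<And>u. (u - e)/e \<ge> 1 \<longleftrightarrow> u \<ge> 2*e"
      using assms by (auto simp: field_simps)
    show ?thesis unfolding g0_def
      using a assms q[of r] q[of "2-r"]
      by (auto simp: min_def max_def field_simps)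
  qed
  thus ?thesis unfolding g_def d r_def by simp
qed

lemma clamp_lip: "\<bar>max 0 (min 1 u) - max 0 (min 1 v)\<bar> \<le> \<bar>u - (v::real)\<bar>"
  by (auto simp: min_def max_def)

lemma g_lip: assumes "0 < e" "e \<le> 1/2"
  shows "\<bar>g e x - g e y\<bar> \<le> \<bar>x - y\<bar> / e"
proof -
  have "\<bar>g e x - g e y\<bar> \<le> \<bar>(dd x - e)/e - (dd y - e)/e\<bar>"
    unfolding g_eq[OF assms] by (rule clamp_lip)
  also have "\<dots> = \<bar>dd x - dd y\<bar> / e" using assms by (simp add: field_simps)
  also have "\<dots> \<le> \<bar>x - y\<bar> / e"
    using dd_lip[of x y] dd_lip[of y x] assms by (intro divide_right_mono) auto
  finally show ?thesis .
qed

lemma g_range: assumes "0 < e" "e \<le> 1/2" shows "0 \<le> g e x" "g e x \<le> 1"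
  unfolding g_eq[OF assms] by auto

lemma g_periodic: "g e (x + 2) = g e x"
proof -
  have "\<lfloor>(x+2)/2\<rfloor> = \<lfloor>x/2\<rfloor> + 1"
    by (metis add_divide_distrib div_self floor_add_int of_int_1 zero_neq_numeral)
  thus ?thesis unfolding g_def by simp
qed

lemma g_cont: assumes "0 < e" "e \<le> 1/2" shows "continuous_on UNIV (g e)"
proof (rule lipschitz_on_continuous_on)
  show "(1/e)-lipschitz_on UNIV (g e)"
    unfolding lipschitz_on_def using g_lip[OF assms] assms by (auto simp: dist_real_def)
qed

lemma g_le: assumes "0 < e" "e \<le> 1/2" shows "g e x \<le> max 0 ((\<bar>x\<bar> - e)/e)"
proof -
  have "dd x \<le> \<bar>x\<bar>" using dd_le[of x 0] by simp
  hence "(dd x - e)/e \<le> (\<bar>x\<bar> - e)/e" using assms by (intro divide_right_mono) auto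
  thus ?thesis unfolding g_eq[OF assms] by auto
qed

lemma one_minus_g: assumes "\<bar>a\<bar> \<le> 1" "e = (1 - \<bar>a\<bar>)/3" "0 < e"
  shows "1 - g e (1 + x - a) \<le> max 0 ((\<bar>x\<bar> - e)/e)"
proof -
  have e2: "e \<le> 1/2" using assms by simp
  have "dd (1 - a) \<le> \<bar>(1-a) - (1+x-a)\<bar> + dd (1+x-a)" by (rule dd_lip)
  hence "dd (1+x-a) \<ge> 1 - \<bar>a\<bar> - \<bar>x\<bar>" using dd_one[OF assms(1)] by simp
  moreover have "3*e = 1 - \<bar>a\<bar>" using assms(2) by simp
  ultimately have "dd (1+x-a) \<ge> 3*e - \<bar>x\<bar>" by linarith
  hence "(dd (1+x-a) - e)/e \<ge> (2*e - \<bar>x\<bar>)/e" using assms(3) by (intro divide_right_mono) auto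
  moreover have "1 - (2*e - \<bar>x\<bar>)/e = (\<bar>x\<bar> - e)/e" using assms by (simp add: field_simps)
  ultimately show ?thesis unfolding g_eq[OF assms(3) e2] by (auto simp: max_def min_def)
qed

lemma key_bound:
  fixes \<alpha> c :: complex and \<phi> e :: real
  assumes c: "c \<noteq> 0" and p0: "0 \<le> \<phi>" and p1: "\<phi> \<le> 1"
    and pe: "\<phi> \<le> max 0 ((\<bar>Re c\<bar> - e)/e)" and e: "3/10 < e" and a: "norm \<alpha> < 1/10"
  shows "norm \<alpha> * \<phi> / norm c < 1/6 \<and> (Re c \<noteq> 0 \<longrightarrow> norm \<alpha> * \<phi> / norm c < 1 / (10 * \<bar>Re c\<bar>))"
proof (cases "\<phi> = 0")
  case True
  thus ?thesis by simp
next
  case False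
  define x where "x = \<bar>Re c\<bar>"
  have n: "x \<le> norm c" unfolding x_def by (rule abs_Re_le_cmod)
  have "\<phi> > 0" using False p0 by simp
  hence "(x - e)/e > 0" using pe unfolding x_def by linarith
  hence xe: "x > e" using e by (simp add: zero_less_divide_iff)
  hence xp: "x > 0" using e by simp
  have "0 < norm c * x" using n xp by (metis less_le_trans mult_pos_pos)
  hence r1: "\<phi> / norm c \<le> \<phi> / x" using n xp p0 by (intro divide_left_mono) auto
  have r2: "\<phi> / x \<le> 1 / (2*e)"
  proof (cases "x \<le> 2*e")
    case True
    have "\<phi> \<le> (x - e)/e" using pe xe e unfolding x_def by auto
    hence "\<phi> / x \<le> ((x - e)/e) / x" using xp by (intro divide_right_mono) auto
    also have "\<dots> \<le> 1/(2*e)" using True xp e by (simp add: field_simps)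
    finally show ?thesis .
  next
    case False
    have "\<phi> / x \<le> 1 / x" using p1 xp by (intro divide_right_mono) auto
    also have "\<dots> \<le> 1/(2*e)" using False e by (intro divide_left_mono) auto
    finally show ?thesis .
  qed
  have "norm \<alpha> * \<phi> / norm c = norm \<alpha> * (\<phi> / norm c)" by simp
  also have "\<dots> \<le> norm \<alpha> * (1/(2*e))" using r1 r2 by (intro mult_left_mono) auto
  also have "\<dots> < 1/6"
  proof -
    have "1/(2*e) < 5/3" using e by (simp add: field_simps)
    hence "norm \<alpha> * (1/(2*e)) \<le> norm \<alpha> * (5/3)" by (intro mult_left_mono) auto
    also have "\<dots> < 1/6" using a by simp
    finally show ?thesis .
  qed
  finally have A: "norm \<alpha> * \<phi> / norm c < 1/6" .
  have "norm \<alpha> * \<phi> / norm c = norm \<alpha> * (\<phi> / norm c)" by simp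
  also have "\<dots> \<le> norm \<alpha> * (1 / x)"
  proof -
    have "\<phi> / x \<le> 1 / x" using p1 xp by (intro divide_right_mono) auto
    thus ?thesis using r1 by (intro mult_left_mono) auto
  qed
  also have "\<dots> < (1/10) * (1/x)" using a xp by (intro mult_strict_right_mono) auto
  finally have B: "norm \<alpha> * \<phi> / norm c < 1 / (10 * \<bar>Re c\<bar>)" unfolding x_def by simp
  show ?thesis using A B by simp
qed

theorem mainTheorem3:
  fixes \<alpha> :: complex
  assumes "norm \<alpha> < 1 / 10"
  shows "(\<exists>h. homeomorphism UNIV UNIV (psi_plus \<alpha>) h)
    \<and> (\<exists>h. homeomorphism UNIV UNIV (psi_minus \<alpha>) h)
    \<and> (\<forall>c. psi_plus \<alpha> (c + 1 - \<alpha>) = psi_minus \<alpha> c + 1)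
    \<and> (\<forall>c. psi_minus \<alpha> (c + 1 + \<alpha>) = psi_plus \<alpha> c + 1)
    \<and> psi_plus \<alpha> 0 = 0 \<and> psi_minus \<alpha> 0 = 0
    \<and> ((\<lambda>c. psi_plus \<alpha> c / c) \<longlongrightarrow> 1) (at 0)
    \<and> ((\<lambda>c. psi_minus \<alpha> c / c) \<longlongrightarrow> 1) (at 0)
    \<and> ((\<lambda>c. psi_plus \<alpha> c / c) \<longlongrightarrow> 1) at_infinity
    \<and> ((\<lambda>c. psi_minus \<alpha> c / c) \<longlongrightarrow> 1) at_infinity
    \<and> (\<forall>c. c \<noteq> 0 \<longrightarrow>
          norm (psi_plus \<alpha> c / c - 1) < 1 / 6
        \<and> (Re c \<noteq> 0 \<longrightarrow> norm (psi_plus \<alpha> c / c - 1) < 1 / (10 * \<bar>Re c\<bar>))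
        \<and> norm (psi_minus \<alpha> c / c - 1) < 1 / 6
        \<and> (Re c \<noteq> 0 \<longrightarrow> norm (psi_minus \<alpha> c / c - 1) < 1 / (10 * \<bar>Re c\<bar>)))"
proof -
  define e where "e = eta \<alpha>"
  define a where "a = Re \<alpha>"
  have aa: "\<bar>a\<bar> < 1/10" unfolding a_def using abs_Re_le_cmod[of \<alpha>] assms by linarith
  have e_def': "e = (1 - \<bar>a\<bar>)/3" unfolding e_def eta_def a_def ..
  have e0: "0 < e" and e2: "e \<le> 1/2" and e3: "3/10 < e" using aa e_def' by auto
  have ae: "\<bar>a\<bar> / e < 1" using aa e3 by (simp add: field_simps)
  have pp: "psi_plus \<alpha> c = c + \<alpha> * complex_of_real (g e (Re c))" for c
    unfolding psi_plus_def e_def ..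
  have pm: "psi_minus \<alpha> c = c - \<alpha> + \<alpha> * complex_of_real (g e (1 + Re c - a))" for c
    unfolding psi_minus_def e_def a_def by (simp add: algebra_simps)
  have eq1: "psi_plus \<alpha> (c + 1 - \<alpha>) = psi_minus \<alpha> c + 1" for c
    unfolding pp pm a_def by (simp add: algebra_simps)
  have eq2: "psi_minus \<alpha> (c + 1 + \<alpha>) = psi_plus \<alpha> c + 1" for c
  proof -
    have "1 + Re (c + 1 + \<alpha>) - a = Re c + 2" unfolding a_def by simp
    thus ?thesis unfolding pp pm by (simp add: algebra_simps g_periodic)
  qed
  have z1: "psi_plus \<alpha> 0 = 0"
  proof -
    have "g e 0 = 0" using g_le[OF e0 e2, of 0] g_range[OF e0 e2, of 0] e0 by simp
    thus ?thesis unfolding pp by simp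
  qed
  have z2: "psi_minus \<alpha> 0 = 0"
  proof -
    have "1 - g e (1 + 0 - a) \<le> max 0 ((\<bar>0\<bar> - e)/e)"
      using one_minus_g[OF _ e_def' e0, of 0] aa by simp
    hence "g e (1 - a) = 1" using g_range[OF e0 e2, of "1-a"] e0 by (simp add: max_def)
    thus ?thesis unfolding pm by simp
  qed
  have err1: "psi_plus \<alpha> c / c - 1 = \<alpha> * complex_of_real (g e (Re c)) / c" if "c \<noteq> 0" for c
    unfolding pp using that by (simp add: field_simps)
  have err2: "psi_minus \<alpha> c / c - 1 = - (\<alpha> * complex_of_real (1 - g e (1 + Re c - a)) / c)" if "c \<noteq> 0" for c
    unfolding pm using that by (simp add: field_simps)
  have nerr1: "norm (psi_plus \<alpha> c / c - 1) = norm \<alpha> * g e (Re c) / norm c" if "c \<noteq> 0" for c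
    unfolding err1[OF that] using g_range[OF e0 e2, of "Re c"] by (simp add: norm_mult norm_divide)
  have nerr2: "norm (psi_minus \<alpha> c / c - 1) = norm \<alpha> * (1 - g e (1 + Re c - a)) / norm c" if "c \<noteq> 0" for c
  proof -
    have "cmod (complex_of_real (1 - g e (1 + Re c - a))) = 1 - g e (1 + Re c - a)"
      using g_range[OF e0 e2, of "1 + Re c - a"] by (simp only: norm_of_real)
    thus ?thesis unfolding err2[OF that] by (simp only: norm_minus_cancel norm_mult norm_divide)
  qed
  have bounds: "norm (psi_plus \<alpha> c / c - 1) < 1 / 6
        \<and> (Re c \<noteq> 0 \<longrightarrow> norm (psi_plus \<alpha> c / c - 1) < 1 / (10 * \<bar>Re c\<bar>))
        \<and> norm (psi_minus \<alpha> c / c - 1) < 1 / 6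
        \<and> (Re c \<noteq> 0 \<longrightarrow> norm (psi_minus \<alpha> c / c - 1) < 1 / (10 * \<bar>Re c\<bar>))" if c: "c \<noteq> 0" for c
  proof -
    have A: "norm \<alpha> * g e (Re c) / norm c < 1/6 \<and> (Re c \<noteq> 0 \<longrightarrow> norm \<alpha> * g e (Re c) / norm c < 1 / (10 * \<bar>Re c\<bar>))"
      by (rule key_bound[OF c g_range(1)[OF e0 e2] g_range(2)[OF e0 e2] g_le[OF e0 e2] e3 assms])
    have B: "norm \<alpha> * (1 - g e (1 + Re c - a)) / norm c < 1/6 \<and> (Re c \<noteq> 0 \<longrightarrow> norm \<alpha> * (1 - g e (1 + Re c - a)) / norm c < 1 / (10 * \<bar>Re c\<bar>))"
      by (rule key_bound[OF c _ _ _ e3 assms]) (use g_range[OF e0 e2, of "1 + Re c - a"] one_minus_g[OF _ e_def' e0, of "Re c"] aa in auto)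
    show ?thesis using A B nerr1[OF c] nerr2[OF c] by simp
  qed
  have loc1: "psi_plus \<alpha> c / c = 1" if "c \<noteq> 0" "norm c < e" for c
  proof -
    have "\<bar>Re c\<bar> < e" using abs_Re_le_cmod[of c] that by linarith
    hence "(\<bar>Re c\<bar> - e)/e < 0" using e0 by (simp add: divide_less_0_iff)
    hence "max 0 ((\<bar>Re c\<bar> - e)/e) = 0" by simp
    hence "g e (Re c) = 0" using g_le[OF e0 e2, of "Re c"] g_range[OF e0 e2, of "Re c"]
      by linarith
    thus ?thesis using err1[OF that(1)] by simp
  qed
  have loc2: "psi_minus \<alpha> c / c = 1" if "c \<noteq> 0" "norm c < e" for c
  proof -
    have "\<bar>Re c\<bar> < e" using abs_Re_le_cmod[of c] that by linarith
    hence "(\<bar>Re c\<bar> - e)/e < 0" using e0 by (simp add: divide_less_0_iff)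
    hence "max 0 ((\<bar>Re c\<bar> - e)/e) = 0" by simp
    moreover have "\<bar>a\<bar> \<le> 1" using aa by simp
    ultimately have "1 - g e (1 + Re c - a) = 0"
      using one_minus_g[OF _ e_def' e0, of "Re c"] g_range[OF e0 e2, of "1 + Re c - a"]
      by linarith
    thus ?thesis using err2[OF that(1)] by simp
  qed
  have ev0: "eventually (\<lambda>c. c \<noteq> 0 \<and> norm c < e) (at (0::complex))"
    using e0 unfolding eventually_at by (intro exI[of _ e]) (auto simp: dist_norm)
  have lim01: "((\<lambda>c. psi_plus \<alpha> c / c) \<longlongrightarrow> 1) (at 0)"
  proof (rule tendsto_eventually)
    show "eventually (\<lambda>c. psi_plus \<alpha> c / c = 1) (at 0)"
      using ev0 by (rule eventually_mono) (blast intro: loc1)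
  qed
  have lim02: "((\<lambda>c. psi_minus \<alpha> c / c) \<longlongrightarrow> 1) (at 0)"
  proof (rule tendsto_eventually)
    show "eventually (\<lambda>c. psi_minus \<alpha> c / c = 1) (at 0)"
      using ev0 by (rule eventually_mono) (blast intro: loc2)
  qed
  have invlim: "((\<lambda>c. norm \<alpha> * norm (inverse c)) \<longlongrightarrow> 0) (at_infinity :: complex filter)"
  proof -
    have "((\<lambda>c::complex. norm (inverse c)) \<longlongrightarrow> 0) at_infinity"
      using tendsto_norm_zero[OF tendsto_inverse_0] by simp
    from tendsto_mult[OF tendsto_const[of "norm \<alpha>"] this] show ?thesis by simp
  qed
  have evi: "eventually (\<lambda>c::complex. c \<noteq> 0) at_infinity"
    unfolding eventually_at_infinity by (intro exI[of _ 1]) auto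
  have limi1: "((\<lambda>c. psi_plus \<alpha> c / c) \<longlongrightarrow> 1) at_infinity"
  proof -
    have "((\<lambda>c. psi_plus \<alpha> c / c - 1) \<longlongrightarrow> 0) at_infinity"
    proof (rule Lim_null_comparison[OF _ invlim])
      show "\<forall>\<^sub>F c in at_infinity. norm (psi_plus \<alpha> c / c - 1) \<le> norm \<alpha> * norm (inverse c)"
      proof (rule eventually_mono[OF evi])
        fix c :: complex assume c: "c \<noteq> 0"
        have "norm \<alpha> * g e (Re c) / norm c \<le> norm \<alpha> * 1 / norm c"
          using g_range[OF e0 e2, of "Re c"] by (intro divide_right_mono mult_left_mono) auto
        thus "norm (psi_plus \<alpha> c / c - 1) \<le> norm \<alpha> * norm (inverse c)"
          using nerr1[OF c] by (simp add: norm_inverse divide_inverse)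
      qed
    qed
    from tendsto_add[OF this tendsto_const[of 1]] show ?thesis by simp
  qed
  have limi2: "((\<lambda>c. psi_minus \<alpha> c / c) \<longlongrightarrow> 1) at_infinity"
  proof -
    have "((\<lambda>c. psi_minus \<alpha> c / c - 1) \<longlongrightarrow> 0) at_infinity"
    proof (rule Lim_null_comparison[OF _ invlim])
      show "\<forall>\<^sub>F c in at_infinity. norm (psi_minus \<alpha> c / c - 1) \<le> norm \<alpha> * norm (inverse c)"
      proof (rule eventually_mono[OF evi])
        fix c :: complex assume c: "c \<noteq> 0"
        have "norm \<alpha> * (1 - g e (1 + Re c - a)) / norm c \<le> norm \<alpha> * 1 / norm c"
          using g_range[OF e0 e2, of "1 + Re c - a"] by (intro divide_right_mono mult_left_mono) auto
        thus "norm (psi_minus \<alpha> c / c - 1) \<le> norm \<alpha> * norm (inverse c)"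
          using nerr2[OF c] by (simp add: norm_inverse divide_inverse)
      qed
    qed
    from tendsto_add[OF this tendsto_const[of 1]] show ?thesis by simp
  qed
  have gc: "continuous_on UNIV (g e)" by (rule g_cont[OF e0 e2])
  have gRe: "continuous_on UNIV (\<lambda>c. g e (Re c))"
    by (rule continuous_on_compose2[OF gc]) (auto intro: continuous_intros)
  have cont1: "continuous_on UNIV (psi_plus \<alpha>)"
    unfolding pp by (intro continuous_intros gRe)
  have inj1: "inj (psi_plus \<alpha>)"
  proof (rule injI)
    fix c d assume h: "psi_plus \<alpha> c = psi_plus \<alpha> d"
    have "Re (psi_plus \<alpha> c) = Re (psi_plus \<alpha> d)" using h by simp
    hence re: "Re c - Re d = a * (g e (Re d) - g e (Re c))" unfolding pp a_def by (simp add: algebra_simps)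
    have "Re c = Re d"
    proof (rule ccontr)
      assume ne: "Re c \<noteq> Re d"
      have "\<bar>Re c - Re d\<bar> = \<bar>a\<bar> * \<bar>g e (Re d) - g e (Re c)\<bar>" using re by (simp add: abs_mult)
      also have "\<dots> \<le> \<bar>a\<bar> * (\<bar>Re d - Re c\<bar> / e)" using g_lip[OF e0 e2] by (intro mult_left_mono) auto
      also have "\<dots> = (\<bar>a\<bar> / e) * \<bar>Re c - Re d\<bar>" by (simp add: abs_minus_commute)
      also have "\<dots> < 1 * \<bar>Re c - Re d\<bar>" using ae ne by (intro mult_strict_right_mono) auto
      finally show False by simp
    qed
    thus "c = d" using h unfolding pp by simp
  qed
  have surj1: "range (psi_plus \<alpha>) = UNIV"
  proof -
    have "w \<in> range (psi_plus \<alpha>)" for w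
    proof -
      define h where "h x = x + a * g e x" for x
      have hc: "continuous_on {Re w - 1 .. Re w + 1} h" unfolding h_def
        using continuous_on_subset[OF gc] by (intro continuous_intros) auto
      have ab: "\<bar>a * g e t\<bar> \<le> \<bar>a\<bar>" for t
        using g_range[OF e0 e2, of t] by (simp add: abs_mult mult_left_le)
      have h1: "h (Re w - 1) \<le> Re w" unfolding h_def using ab[of "Re w - 1"] aa by linarith
      have h2: "Re w \<le> h (Re w + 1)" unfolding h_def using ab[of "Re w + 1"] aa by linarith
      have "\<exists>x. Re w - 1 \<le> x \<and> x \<le> Re w + 1 \<and> h x = Re w"
        by (rule IVT'[OF h1 h2 _ hc]) simp
      then obtain x where x: "h x = Re w" by blast
      define c where "c = Complex x (Im w - Im \<alpha> * g e x)"
      have "psi_plus \<alpha> c = w" unfolding pp c_def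
        using x unfolding h_def a_def by (intro complex_eqI) auto
      thus ?thesis by (metis rangeI)
    qed
    thus ?thesis by auto
  qed
  obtain h1 where h1: "homeomorphism UNIV (range (psi_plus \<alpha>)) (psi_plus \<alpha>) h1"
    using invariance_of_domain_homeomorphism[OF open_UNIV cont1 _ inj1] by auto
  have H1: "\<exists>h. homeomorphism UNIV UNIV (psi_plus \<alpha>) h" using h1 surj1 by auto
  have pm2: "psi_minus \<alpha> = (\<lambda>c. psi_plus \<alpha> (c + 1 - \<alpha>) - 1)"
    using eq1 by (simp add: fun_eq_iff algebra_simps)
  have cont2: "continuous_on UNIV (psi_minus \<alpha>)" unfolding pm2
    by (intro continuous_intros continuous_on_compose2[OF cont1]) auto
  have inj2: "inj (psi_minus \<alpha>)"
    unfolding pm2 by (rule injI) (use inj1 in \<open>auto dest: injD\<close>)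
  have surj2: "range (psi_minus \<alpha>) = UNIV"
  proof -
    have "w \<in> range (psi_minus \<alpha>)" for w
    proof -
      obtain c where "psi_plus \<alpha> c = w + 1" using surj1 by (metis UNIV_I imageE)
      hence "psi_minus \<alpha> (c - 1 + \<alpha>) = w" unfolding pm2 by simp
      thus ?thesis by (metis rangeI)
    qed
    thus ?thesis by auto
  qed
  obtain h2 where h2: "homeomorphism UNIV (range (psi_minus \<alpha>)) (psi_minus \<alpha>) h2"
    using invariance_of_domain_homeomorphism[OF open_UNIV cont2 _ inj2] by auto
  have H2: "\<exists>h. homeomorphism UNIV UNIV (psi_minus \<alpha>) h" using h2 surj2 by auto
  show ?thesis using H1 H2 eq1 eq2 z1 z2 lim01 lim02 limi1 limi2 bounds by blast
qed

end
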